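(* Let $\operatorname{d}_q=q\frac{d}{dq}$. For all integers $s_1,\dots,s_l\ge1$, $r_1,\dots,r_l\ge0$, \[ \operatorname{d}_q\left[\begin{matrix}s_1,\dots,s_l\\ r_1,\dots,r_l\end{matrix}\right]=\sum_{j=1}^{l}s_j(r_j+1)\left[\begin{matrix}s_1,\dots,s_{j-1},\,s_j+1,\,s_{j+1},\dots,s_l\\ r_1,\dots,r_{j-1},\,r_j+1,\,r_{j+1},\dots,r_l\end{matrix}\right]. \] Consequently $\operatorname{d}_q\big(\operatorname{Fil}_{k,d,l}\big)\subset\operatorname{Fil}_{k+1,d+1,l}$ for all $k,d,l\ge0$.
   Context: Bi-brackets: for integers $s_1,\dots,s_l\ge1$, $r_1,\dots,r_l\ge0$, \[ \left[\begin{matrix}s_1,\dots,s_l\\ r_1,\dots,r_l\end{matrix}\right]:=\sum_{\substack{u_1>\dots>u_l>0\\ v_1,\dots,v_l>0}}\prod_{j=1}^{l}\frac{u_j^{r_j}}{r_j!}\,\frac{v_j^{s_j-1}}{(s_j-1)!}\;q^{u_1v_1+\dots+u_lv_l}\in\mathbb{Q}[[q]]; \] its upper weight is $s_1+\dots+s_l$, lower weight $r_1+\dots+r_l$, length $l$ (the constant $1$ is regarded as the bi-bracket of length $0$). $\operatorname{Fil}_{k,d,l}$ denotes the $\mathbb{Q}$-span of those bi-brackets (including possibly $1$) whose length $t$ satisfies $t\le k$, $t\le d$, $t\le l$, whose upper weight is $\le k$ and whose lower weight is $\le d$ (this is the intersection of the upper weight, lower weight and length filtrations, where the upper weight filtration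 $\operatorname{Fil}^W_k$ is spanned by bi-brackets of length $\le k$ and upper weight $\le k$, the lower weight filtration $\operatorname{Fil}^D_d$ by bi-brackets of length $\le d$ and lower weight $\le d$, and the length filtration $\operatorname{Fil}^L_l$ by bi-brackets of length $\le l$). *)

theory Defs
  imports "HOL-Computational_Algebra.Formal_Power_Series"
begin

text \<open>Index tuples (u_1,...,u_l), (v_1,...,v_l) (as lists) contributing to the
coefficient of q^N in the bi-bracket of length l:
u_1 > ... > u_l > 0, all v_j > 0, and u_1 v_1 + ... + u_l v_l = N.\<close>
definition bb_index :: "nat \<Rightarrow> nat \<Rightarrow> (nat list \<times> nat list) set" where
  "bb_index l N = {(u, v). length u = l \<and> length v = l \<and>
      sorted_wrt (>) u \<and> (\<forall>x\<in>set u. x > 0) \<and> (\<forall>y\<in>set v. y > 0) \<and>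
      (\<Sum>j<l. u ! j * v ! j) = N}"

text \<open>The bi-bracket with upper entries s and lower entries r (lists of equal length),
as a formal power series in q over the rationals.\<close>
definition bibracket :: "nat list \<Rightarrow> nat list \<Rightarrow> rat fps" where
  "bibracket s r = Abs_fps (\<lambda>N. \<Sum>(u, v) \<in> bb_index (length s) N.
      \<Prod>j<length s. (of_nat (u ! j ^ (r ! j)) / fact (r ! j)) *
                     (of_nat (v ! j ^ (s ! j - 1)) / fact (s ! j - 1)))"

definition dq :: "rat fps \<Rightarrow> rat fps" where
  "dq f = fps_X * fps_deriv f"

text \<open>Admissible index data for Fil_{k,d,l}: s_j \<ge> 1, r_j \<ge> 0, length t with
t \<le> k, t \<le> d, t \<le> l, upper weight \<le> k, lower weight \<le> d.
(The empty index gives the bi-bracket 1.)\<close>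
definition fil_index :: "nat \<Rightarrow> nat \<Rightarrow> nat \<Rightarrow> (nat list \<times> nat list) set" where
  "fil_index k d l = {(s, r). length s = length r \<and> (\<forall>x\<in>set s. x \<ge> 1) \<and>
      length s \<le> k \<and> length s \<le> d \<and> length s \<le> l \<and>
      sum_list s \<le> k \<and> sum_list r \<le> d}"

definition Fil :: "nat \<Rightarrow> nat \<Rightarrow> nat \<Rightarrow> rat fps set" where
  "Fil k d l = {f. \<exists>A c. finite A \<and> A \<subseteq> fil_index k d l \<and>
      f = (\<Sum>(s, r)\<in>A. fps_const (c (s, r)) * bibracket s r)}"

end

theory Submission
  imports Defs
begin

lemma dq_nth: "fps_nth (dq f) n = of_nat n * fps_nth f n"
  unfolding dq_def by (cases n) simp_all

lemma key:
  assumes "(s::nat) \<ge> 1"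
  shows "of_nat (u*v) * (of_nat (u^r)/fact r * (of_nat (v^(s-1))/fact (s-1)))
     = (of_nat (s*(r+1)) :: rat) * (of_nat (u^(r+1))/fact(r+1) * (of_nat (v^(s+1-1))/fact(s+1-1)))"
proof -
  obtain m where s: "s = Suc m" using assms by (cases s) auto
  have f1: "(fact (Suc r)::rat) = of_nat (Suc r) * fact r" by simp
  have f2: "(fact (Suc m)::rat) = of_nat (Suc m) * fact m" by simp
  have nz: "(fact r::rat) \<noteq> 0" "(fact m::rat) \<noteq> 0" "(of_nat (Suc r)::rat) \<noteq> 0" "(of_nat (Suc m)::rat) \<noteq> 0" by auto
  show ?thesis unfolding s using nz by (simp only: Suc_eq_plus1[symmetric] diff_Suc_1 f1 f2 power_Suc of_nat_mult) (simp add: field_simps del: of_nat_Suc)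
qed

definition tm :: "nat list \<Rightarrow> nat list \<Rightarrow> nat list \<Rightarrow> nat list \<Rightarrow> nat \<Rightarrow> rat" where
  "tm s r u v j = (of_nat (u ! j ^ (r ! j)) / fact (r ! j)) *
                     (of_nat (v ! j ^ (s ! j - 1)) / fact (s ! j - 1))"

lemma bib_nth: "fps_nth (bibracket s r) N = (\<Sum>(u, v) \<in> bb_index (length s) N. \<Prod>j<length s. tm s r u v j)"
  unfolding bibracket_def tm_def by simp

lemma prod_key:
  assumes "j < length s" "length r = length s" "\<forall>x\<in>set s. x \<ge> 1"
  shows "of_nat (u!j * v!j) * (\<Prod>i<length s. tm s r u v i)
     = of_nat (s ! j * (r ! j + 1)) * (\<Prod>i<length s. tm (s[j := s ! j + 1]) (r[j := r ! j + 1]) u v i)"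
proof -
  have sj: "s ! j \<ge> 1" using assms by auto
  have fin: "finite {..<length s}" by simp
  have jin: "j \<in> {..<length s}" using assms by simp
  have e1: "(\<Prod>i<length s. tm s r u v i) = tm s r u v j * (\<Prod>i\<in>{..<length s}-{j}. tm s r u v i)"
    using prod.remove[OF fin jin] by simp
  have e2: "(\<Prod>i<length s. tm (s[j := s ! j + 1]) (r[j := r ! j + 1]) u v i) =
     tm (s[j := s ! j + 1]) (r[j := r ! j + 1]) u v j * (\<Prod>i\<in>{..<length s}-{j}. tm s r u v i)"
  proof -
    have "(\<Prod>i\<in>{..<length s}-{j}. tm (s[j := s ! j + 1]) (r[j := r ! j + 1]) u v i) = (\<Prod>i\<in>{..<length s}-{j}. tm s r u v i)"
      by (rule prod.cong) (auto simp: tm_def)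
    then show ?thesis by (simp only: prod.remove[OF fin jin])
  qed
  have e3: "tm (s[j := s ! j + 1]) (r[j := r ! j + 1]) u v j =
     (of_nat (u ! j ^ (r ! j + 1)) / fact (r ! j + 1)) *
                     (of_nat (v ! j ^ (s ! j + 1 - 1)) / fact (s ! j + 1 - 1))"
    using assms by (simp add: tm_def)
  have e4: "of_nat (u!j * v!j) * tm s r u v j = of_nat (s ! j * (r ! j + 1)) * tm (s[j := s ! j + 1]) (r[j := r ! j + 1]) u v j"
    unfolding e3 unfolding tm_def by (rule key[OF sj])
  show ?thesis unfolding e1 e2 using e4 by (simp add: mult.assoc[symmetric])
qed

lemma part1:
  assumes "length s = length r" "\<forall>x\<in>set s. x \<ge> 1"
  shows "dq (bibracket s r) =
              (\<Sum>j<length s. fps_const (of_nat (s ! j * (r ! j + 1))) *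
                 bibracket (s[j := s ! j + 1]) (r[j := r ! j + 1]))"
proof (rule fps_ext)
  fix N
  have "fps_nth (dq (bibracket s r)) N = (\<Sum>(u, v) \<in> bb_index (length s) N. of_nat N * (\<Prod>j<length s. tm s r u v j))"
    by (simp add: dq_nth bib_nth sum_distrib_left case_prod_unfold)
  also have "\<dots> = (\<Sum>(u, v) \<in> bb_index (length s) N. \<Sum>j<length s.
      of_nat (s ! j * (r ! j + 1)) * (\<Prod>i<length s. tm (s[j := s ! j + 1]) (r[j := r ! j + 1]) u v i))"
  proof (rule sum.cong[OF refl], clarify)
    fix u v assume "(u, v) \<in> bb_index (length s) N"
    then have N: "N = (\<Sum>j<length s. u ! j * v ! j)" by (simp add: bb_index_def)
    have "of_nat N * (\<Prod>j<length s. tm s r u v j) = (\<Sum>j<length s. of_nat (u!j * v!j) * (\<Prod>i<length s. tm s r u v i))"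
      unfolding N by (simp add: sum_distrib_right)
    also have "\<dots> = (\<Sum>j<length s. of_nat (s ! j * (r ! j + 1)) * (\<Prod>i<length s. tm (s[j := s ! j + 1]) (r[j := r ! j + 1]) u v i))"
      by (rule sum.cong[OF refl]) (intro prod_key, use assms in auto)
    finally show "of_nat N * (\<Prod>j<length s. tm s r u v j) = (\<Sum>j<length s. of_nat (s ! j * (r ! j + 1)) * (\<Prod>i<length s. tm (s[j := s ! j + 1]) (r[j := r ! j + 1]) u v i))" .
  qed
  also have "\<dots> = fps_nth (\<Sum>j<length s. fps_const (of_nat (s ! j * (r ! j + 1))) *
                 bibracket (s[j := s ! j + 1]) (r[j := r ! j + 1])) N"
    by (simp add: fps_sum_nth bib_nth sum_distrib_left case_prod_unfold sum.swap[where A="bb_index _ _"])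
  finally show "fps_nth (dq (bibracket s r)) N = fps_nth (\<Sum>j<length s. fps_const (of_nat (s ! j * (r ! j + 1))) *
                 bibracket (s[j := s ! j + 1]) (r[j := r ! j + 1])) N" .
qed


lemma Fil_zero: "0 \<in> Fil k d l"
  unfolding Fil_def by (rule CollectI, rule exI[of _ "{}"]) simp

lemma Fil_add: assumes "f \<in> Fil k d l" "g \<in> Fil k d l" shows "f + g \<in> Fil k d l"
proof -
  obtain A c where A: "finite A" "A \<subseteq> fil_index k d l" "f = (\<Sum>(s, r)\<in>A. fps_const (c (s, r)) * bibracket s r)"
    using assms(1) unfolding Fil_def mem_Collect_eq by (elim exE conjE)
  obtain B c' where B: "finite B" "B \<subseteq> fil_index k d l" "g = (\<Sum>(s, r)\<in>B. fps_const (c' (s, r)) * bibracket s r)"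
    using assms(2) unfolding Fil_def mem_Collect_eq by (elim exE conjE)
  define c'' where "c'' x = (if x \<in> A then c x else 0) + (if x \<in> B then c' x else 0)" for x
  let ?b = "\<lambda>x. bibracket (fst x) (snd x)"
  have fA: "f = (\<Sum>x\<in>A\<union>B. if x \<in> A then fps_const (c x) * ?b x else 0)"
    using A B by (simp add: sum.If_cases Int_absorb1 case_prod_unfold)
  have fB: "g = (\<Sum>x\<in>A\<union>B. if x \<in> B then fps_const (c' x) * ?b x else 0)"
    using A B by (simp add: sum.If_cases Int_absorb1 case_prod_unfold Int_commute)
  have "f + g = (\<Sum>x\<in>A\<union>B. fps_const (c'' x) * ?b x)"
    unfolding fA fB sum.distrib[symmetric]
    by (rule sum.cong) (auto simp: c''_def distrib_right simp del: fps_const_add simp flip: fps_const_add)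
  then show ?thesis unfolding Fil_def using A B
    by (intro CollectI exI[of _ "A \<union> B"] exI[of _ c'']) (auto simp: case_prod_unfold)
qed

lemma Fil_smult: assumes "f \<in> Fil k d l" shows "fps_const a * f \<in> Fil k d l"
proof -
  obtain A c where A: "finite A" "A \<subseteq> fil_index k d l" "f = (\<Sum>(s, r)\<in>A. fps_const (c (s, r)) * bibracket s r)"
    using assms(1) unfolding Fil_def mem_Collect_eq by (elim exE conjE)
  have "fps_const a * f = (\<Sum>(s, r)\<in>A. fps_const (a * c (s, r)) * bibracket s r)"
    unfolding A(3) by (simp add: sum_distrib_left case_prod_unfold mult.assoc del: fps_const_mult flip: fps_const_mult)
  then show ?thesis unfolding Fil_def using A
    by (intro CollectI exI[of _ A] exI[of _ "\<lambda>x. a * c x"]) auto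
qed

lemma Fil_single: assumes "(s, r) \<in> fil_index k d l" shows "bibracket s r \<in> Fil k d l"
  unfolding Fil_def using assms
  by (intro CollectI exI[of _ "{(s,r)}"] exI[of _ "\<lambda>_. 1"]) auto

lemma Fil_sum: "finite A \<Longrightarrow> (\<forall>x\<in>A. g x \<in> Fil k d l) \<Longrightarrow> sum g A \<in> Fil k d l"
  by (induction A rule: finite_induct) (auto intro: Fil_zero Fil_add)

lemma dq_sum: "dq (sum g A) = (\<Sum>x\<in>A. dq (g x))"
  by (rule fps_ext) (simp add: dq_nth fps_sum_nth sum_distrib_left)

lemma dq_smult: "dq (fps_const a * f) = fps_const a * dq f"
  unfolding dq_def by (simp add: mult.left_commute)

lemma dq_bb_Fil:
  assumes "(s, r) \<in> fil_index k d l"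
  shows "dq (bibracket s r) \<in> Fil (k+1) (d+1) l"
proof -
  have len: "length s = length r" and pos: "\<forall>x\<in>set s. x \<ge> 1" using assms by (auto simp: fil_index_def)
  show ?thesis unfolding part1[OF len pos]
  proof (rule Fil_sum, simp, intro ballI Fil_smult Fil_single)
    fix j assume "j \<in> {..<length s}"
    then have j: "j < length s" by simp
    have s1: "sum_list (s[j := s ! j + 1]) = sum_list s + 1"
      using j by (simp add: sum_list_update)
    have r1: "sum_list (r[j := r ! j + 1]) = sum_list r + 1"
      using j len by (simp add: sum_list_update)
    have "\<forall>x\<in>set (s[j := s ! j + 1]). x \<ge> 1"
      using pos j by (auto dest!: set_update_subset_insert[THEN subsetD])
    then show "(s[j := s ! j + 1], r[j := r ! j + 1]) \<in> fil_index (k + 1) (d + 1) l"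
      using assms s1 r1 len by (auto simp: fil_index_def)
  qed
qed

theorem proposition4p2:
  shows "(\<forall>s r. length s = length r \<longrightarrow> (\<forall>x\<in>set s. x \<ge> 1) \<longrightarrow>
            dq (bibracket s r) =
              (\<Sum>j<length s. fps_const (of_nat (s ! j * (r ! j + 1))) *
                 bibracket (s[j := s ! j + 1]) (r[j := r ! j + 1])))
       \<and> (\<forall>k d l. dq ` Fil k d l \<subseteq> Fil (k + 1) (d + 1) l)"
proof (intro conjI allI impI)
  fix s r :: "nat list" assume "length s = length r" "\<forall>x\<in>set s. x \<ge> 1"
  then show "dq (bibracket s r) =
              (\<Sum>j<length s. fps_const (of_nat (s ! j * (r ! j + 1))) *
                 bibracket (s[j := s ! j + 1]) (r[j := r ! j + 1]))" by (rule part1)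
next
  fix k d l
  show "dq ` Fil k d l \<subseteq> Fil (k + 1) (d + 1) l"
  proof
    fix g assume "g \<in> dq ` Fil k d l"
    then obtain f where g: "g = dq f" and f: "f \<in> Fil k d l" by blast
    obtain A c where A: "finite A" "A \<subseteq> fil_index k d l" "f = (\<Sum>(s, r)\<in>A. fps_const (c (s, r)) * bibracket s r)"
      using f unfolding Fil_def mem_Collect_eq by (elim exE conjE)
    have "g = (\<Sum>x\<in>A. fps_const (c x) * dq (bibracket (fst x) (snd x)))"
      unfolding g A(3) dq_sum by (simp add: case_prod_unfold dq_smult)
    also have "\<dots> \<in> Fil (k + 1) (d + 1) l"
    proof (rule Fil_sum[OF A(1)], rule ballI, rule Fil_smult)
      fix x assume "x \<in> A"
      then have "(fst x, snd x) \<in> fil_index k d l" using A(2) by auto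
      then show "dq (bibracket (fst x) (snd x)) \<in> Fil (k + 1) (d + 1) l"
        by (rule dq_bb_Fil)
    qed
    finally show "g \<in> Fil (k + 1) (d + 1) l" .
  qed
qed
end
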